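(* Let $\mu,\nu$ be Borel probability measures on $\mathbb{R}^d$ such that: (a) there is a bounded connected open Lipschitz domain $\Omega\subset B(0,1)$ with $\mu(dx)=\rho_\mu(x)\mathbf 1_\Omega(x)dx$ and $0<\underline\lambda_\mu\le\rho_\mu\le\overline\lambda_\mu<\infty$ a.e. on $\Omega$; (b) $\nu\ll\mathrm{Leb}$, $\operatorname{spt}\nu\subseteq B(0,1)$, $d\nu/dy\le\overline\lambda_\nu<\infty$ on $\operatorname{spt}\nu$; (c) the Monge map $T=\nabla\varphi$ is $L$-Lipschitz. Let $C_{\mathrm{val}}$ be a constant with $C_{\mathrm{val}}^{-1}\varepsilon^{2/(2+d)}\le\Delta_\varepsilon\le C_{\mathrm{val}}\varepsilon^{2/(2+d)}$ for $\varepsilon\in(0,1]$, and $c_{\mathrm{sm}}=\big(2\overline\lambda_\nu(1+L^2)^{d/2}\omega_dC_{\mathrm{val}}\big)^{-1/d}$. Then for every $\varepsilon\in(0,1]$, $$\operatorname{dist}(\operatorname{spt}\pi_\varepsilon;\operatorname{gr}T)\ge c_{\mathrm{sm}}\varepsilon^{\frac{1}{d+2}}\quad\text{and hence}\quad\sup_{(x,y)\in\operatorname{spt}\pi_\varepsilon}\|y-T(x)\|\ge c_{\mathrm{sm}}\varepsilon^{\frac{1}{d+2}}.$$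
   Context: Cost $c(x,y)=\frac12\|x-y\|^2$, $P=\mu\otimes\nu$, $\mathrm{OT}(\mu,\nu)=\inf_{\pi\in\Pi(\mu,\nu)}\int c\,d\pi$; $T=\nabla\varphi$ ($\varphi$ convex) is the Brenier optimal map with $T_\#\mu=\nu$. For $\varepsilon>0$, $\mathrm{QOT}_\varepsilon(\mu,\nu)=\inf_{\pi\in\Pi(\mu,\nu),\pi\ll P}\{\int c\,d\pi+\frac\varepsilon2\|\frac{d\pi}{dP}\|^2_{L^2(P)}\}$, $\pi_\varepsilon$ its unique optimizer, $\Delta_\varepsilon=\mathrm{QOT}_\varepsilon-\mathrm{OT}$. $\operatorname{gr}T$ is the graph of $T$, $\operatorname{dist}(A;B)=\sup_{a\in A}\inf_{b\in B}\|a-b\|$ (Euclidean in $\mathbb{R}^{2d}$), $\omega_d$ the unit-ball volume. *)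

theory Defs
  imports "HOL-Analysis.Analysis" "HOL-Probability.Probability"
begin

definition qcost :: "'a::euclidean_space \<times> 'a \<Rightarrow> real" where
  "qcost z = (norm (fst z - snd z))^2 / 2"

definition couplings :: "'a measure \<Rightarrow> 'b measure \<Rightarrow> ('a \<times> 'b) measure set" where
  "couplings \<mu> \<nu> = {\<pi>. sets \<pi> = sets (\<mu> \<Otimes>\<^sub>M \<nu>) \<and> prob_space \<pi> \<and>
      distr \<pi> \<mu> fst = \<mu> \<and> distr \<pi> \<nu> snd = \<nu>}"

definition OT :: "'a::euclidean_space measure \<Rightarrow> 'a measure \<Rightarrow> ennreal" where
  "OT \<mu> \<nu> = (INF \<pi>\<in>couplings \<mu> \<nu>. \<integral>\<^sup>+ z. ennreal (qcost z) \<partial>\<pi>)"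

definition qot_obj :: "real \<Rightarrow> 'a::euclidean_space measure \<Rightarrow> 'a measure \<Rightarrow> ('a \<times> 'a) measure \<Rightarrow> ennreal" where
  "qot_obj \<epsilon> \<mu> \<nu> \<pi> = (\<integral>\<^sup>+ z. ennreal (qcost z) \<partial>\<pi>)
      + ennreal (\<epsilon> / 2) * (\<integral>\<^sup>+ z. (RN_deriv (\<mu> \<Otimes>\<^sub>M \<nu>) \<pi> z)^2 \<partial>(\<mu> \<Otimes>\<^sub>M \<nu>))"

definition QOT :: "real \<Rightarrow> 'a::euclidean_space measure \<Rightarrow> 'a measure \<Rightarrow> ennreal" where
  "QOT \<epsilon> \<mu> \<nu> = (INF \<pi>\<in>{\<pi>\<in>couplings \<mu> \<nu>. absolutely_continuous (\<mu> \<Otimes>\<^sub>M \<nu>) \<pi>}.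
      qot_obj \<epsilon> \<mu> \<nu> \<pi>)"

definition is_QOT_optimizer :: "real \<Rightarrow> 'a::euclidean_space measure \<Rightarrow> 'a measure \<Rightarrow> ('a \<times> 'a) measure \<Rightarrow> bool" where
  "is_QOT_optimizer \<epsilon> \<mu> \<nu> \<pi> \<longleftrightarrow> \<pi> \<in> couplings \<mu> \<nu> \<and>
      absolutely_continuous (\<mu> \<Otimes>\<^sub>M \<nu>) \<pi> \<and> qot_obj \<epsilon> \<mu> \<nu> \<pi> = QOT \<epsilon> \<mu> \<nu>"

text \<open>Delta_eps = QOT_eps - OT (both finite in the situation considered).\<close>
definition QOT_gap :: "real \<Rightarrow> 'a::euclidean_space measure \<Rightarrow> 'a measure \<Rightarrow> real" where
  "QOT_gap \<epsilon> \<mu> \<nu> = enn2real (QOT \<epsilon> \<mu> \<nu>) - enn2real (OT \<mu> \<nu>)"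

definition spt :: "'a::metric_space measure \<Rightarrow> 'a set" where
  "spt M = {z. \<forall>e>0. emeasure M (ball z e) \<noteq> 0}"

definition set_dist :: "'a::metric_space set \<Rightarrow> 'a set \<Rightarrow> ereal" where
  "set_dist A B = (SUP a\<in>A. ereal (infdist a B))"

definition lipschitz_domain :: "'a::euclidean_space set \<Rightarrow> bool" where
  "lipschitz_domain \<Omega> \<longleftrightarrow> open \<Omega> \<and>
     (\<forall>p\<in>frontier \<Omega>. \<exists>r>0. \<exists>e::'a. \<exists>h::'a \<Rightarrow> real. \<exists>M.
        norm e = 1 \<and> M-lipschitz_on {v. v \<bullet> e = 0} h \<and>
        \<Omega> \<inter> ball p r = {x\<in>ball p r. x \<bullet> e < h (x - (x \<bullet> e) *\<^sub>R e)})"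

end

theory Submission
  imports Defs
begin


lemma spt_compl:
  fixes M :: "'b::{metric_space,second_countable_topology} measure"
  assumes "sets M = sets borel"
  shows "- spt M = \<Union>{ball z e | z e. 0 < e \<and> emeasure M (ball z e) = 0}"
proof
  show "- spt M \<subseteq> \<Union>{ball z e | z e. 0 < e \<and> emeasure M (ball z e) = 0}"
    unfolding spt_def by auto (metis centre_in_ball)
next
  show "\<Union>{ball z e | z e. 0 < e \<and> emeasure M (ball z e) = 0} \<subseteq> - spt M"
  proof clarify
    fix w z e assume e: "0 < e" "emeasure M (ball z e) = 0" "w \<in> ball z e" "w \<in> spt M"
    let ?d = "e - dist z w"
    have d: "?d > 0" using e by auto
    have "ball w ?d \<subseteq> ball z e"
    proof
      fix x assume "x \<in> ball w ?d"
      then show "x \<in> ball z e" using dist_triangle[of z x w] by (simp add: dist_commute)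
    qed
    then have "emeasure M (ball w ?d) \<le> emeasure M (ball z e)"
      by (intro emeasure_mono) (auto simp: assms)
    with e d show False unfolding spt_def by auto
  qed
qed

lemma spt_closed:
  fixes M :: "'b::{metric_space,second_countable_topology} measure"
  assumes "sets M = sets borel"
  shows "closed (spt M)"
proof -
  have "open (- spt M)" using spt_compl[OF assms] by auto
  then show ?thesis by (simp add: closed_def)
qed

lemma spt_null:
  fixes M :: "'b::{metric_space,second_countable_topology} measure"
  assumes "sets M = sets borel"
  shows "- spt M \<in> null_sets M"
proof -
  let ?F = "{ball z e | z e. 0 < e \<and> emeasure M (ball z e) = 0}"
  obtain F' where F': "F' \<subseteq> ?F" "countable F'" "\<Union>F' = \<Union>?F"
    by (rule Lindelof[of ?F]) auto
  have "(\<Union>B\<in>F'. B) \<in> null_sets M"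
  proof (rule null_sets_UN'[OF F'(2)])
    fix B assume "B \<in> F'"
    with F'(1) obtain z e where "B = ball z e" "emeasure M (ball z e) = 0" by auto
    then show "B \<in> null_sets M" by (auto simp: null_sets_def assms)
  qed
  then show ?thesis using F'(3) spt_compl[OF assms] by simp
qed



lemma lborel_ball:
  fixes c :: "'a::euclidean_space"
  assumes "r \<ge> 0"
  shows "emeasure lborel (ball c r) = ennreal (r ^ DIM('a) * measure lborel (ball (0::'a) 1))"
proof -
  have "emeasure lborel (ball c r) = emeasure lebesgue (ball c r)" by simp
  also have "\<dots> = ennreal (r ^ DIM('a)) * emeasure lebesgue (ball (0 :: 'a) 1)"
    using assms by (rule emeasure_lebesgue_ball_conv_unit_ball)
  also have "\<dots> = ennreal (r ^ DIM('a)) * emeasure lborel (ball (0 :: 'a) 1)" by simp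
  also have "\<dots> = ennreal (r ^ DIM('a) * measure lborel (ball (0::'a) 1))"
    using emeasure_lborel_ball_finite[of "0::'a" 1] assms
    by (subst emeasure_eq_ennreal_measure) (auto simp: ennreal_mult')
  finally show ?thesis .
qed

lemma nu_ball:
  fixes \<nu> :: "'a::euclidean_space measure"
  assumes nu_borel: "sets \<nu> = sets borel"
    and nu_ac: "absolutely_continuous lborel \<nu>"
    and nu_dens: "AE y in lborel. y \<in> spt \<nu> \<longrightarrow> RN_deriv lborel \<nu> y \<le> ennreal lam_nu"
    and null: "- spt \<nu> \<in> null_sets \<nu>"
    and cl: "closed (spt \<nu>)"
    and B: "B \<in> sets borel"
  shows "emeasure \<nu> B \<le> ennreal lam_nu * emeasure lborel B"
proof -
  have sptm: "spt \<nu> \<in> sets borel" using cl by auto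
  have dens: "density lborel (RN_deriv lborel \<nu>) = \<nu>"
    using nu_ac nu_borel by (intro sigma_finite_measure.density_RN_deriv[OF sigma_finite_lborel]) auto
  have "emeasure \<nu> B \<le> emeasure \<nu> ((B \<inter> spt \<nu>) \<union> (- spt \<nu>))"
    by (intro emeasure_mono) (use B sptm nu_borel in auto)
  also have "\<dots> \<le> emeasure \<nu> (B \<inter> spt \<nu>) + emeasure \<nu> (- spt \<nu>)"
    by (intro emeasure_subadditive) (use B sptm nu_borel cl in auto)
  also have "\<dots> = emeasure \<nu> (B \<inter> spt \<nu>)" using null by auto
  also have "\<dots> = (\<integral>\<^sup>+ y. RN_deriv lborel \<nu> y * indicator (B \<inter> spt \<nu>) y \<partial>lborel)"
    by (subst dens[symmetric], subst emeasure_density) (use B sptm in auto)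
  also have "\<dots> \<le> (\<integral>\<^sup>+ y. ennreal lam_nu * indicator B y \<partial>lborel)"
    by (intro nn_integral_mono_AE, use nu_dens in eventually_elim) (auto simp: indicator_def)
  also have "\<dots> = ennreal lam_nu * emeasure lborel B"
    using B by (intro nn_integral_cmult_indicator) auto
  finally show ?thesis .
qed



lemma infdist_lessE:
  assumes "infdist x A < d" "A \<noteq> {}"
  obtains a where "a \<in> A" "dist x a < d"
proof -
  have "(INF a\<in>A. dist x a) < d" using assms by (simp add: infdist_notempty)
  then have "\<exists>a\<in>A. dist x a < d" using assms(2)
    by (subst (asm) cINF_less_iff) (auto intro: bdd_belowI[of _ 0])
  then show ?thesis using that by blast
qed

lemma graph_close:
  fixes T :: "'a::real_normed_vector \<Rightarrow> 'b::real_normed_vector"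
  assumes lip: "L-lipschitz_on UNIV T"
    and d: "dist (x, y) (x', T x') < d"
  shows "norm (y - T x) < sqrt (1 + L^2) * d"
proof -
  define a where "a = dist y (T x')"
  define b where "b = dist x x'"
  have L: "L \<ge> 0" and Tb: "dist (T x') (T x) \<le> L * b"
    using lip unfolding lipschitz_on_def b_def by (auto simp: dist_commute)
  have ab: "sqrt (a^2 + b^2) < d" using d by (simp add: dist_Pair_Pair a_def b_def add.commute)
  have "norm (y - T x) = dist y (T x)" by (simp add: dist_norm)
  also have "\<dots> \<le> a + L * b" using dist_triangle[of y "T x" "T x'"] Tb a_def by linarith
  also have "\<dots> \<le> sqrt (1 + L^2) * sqrt (a^2 + b^2)"
  proof -
    have "(a + L*b)^2 \<le> (1 + L^2) * (a^2 + b^2)"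
      using sum_squares_ge_zero[of "L*a - b" 0] by (simp add: power2_eq_square algebra_simps)
    then have "sqrt ((a + L*b)^2) \<le> sqrt ((1 + L^2) * (a^2 + b^2))" by (rule real_sqrt_le_mono)
    moreover have "a + L*b \<ge> 0" using L by (simp add: a_def b_def)
    ultimately show ?thesis by (simp add: real_sqrt_mult)
  qed
  also have "\<dots> < sqrt (1 + L^2) * d"
    using ab by (intro mult_strict_left_mono) (auto intro: add_pos_nonneg)
  finally show ?thesis .
qed

lemma arith_final:
  fixes K e \<delta> :: real and d :: nat
  assumes K: "K > 0" and e: "e > 0" and \<delta>: "\<delta> > 0" and d: "d \<ge> 1"
    and h: "e powr (real d / (real d + 2)) \<le> K * \<delta> ^ d"
  shows "K powr (- 1 / real d) * e powr (1 / (real d + 2)) \<le> \<delta>"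
proof -
  have "(e powr (real d / (real d + 2))) powr (1 / real d) \<le> (K * \<delta> ^ d) powr (1 / real d)"
    using h e d by (intro powr_mono2) auto
  moreover have "(e powr (real d / (real d + 2))) powr (1 / real d) = e powr (1 / (real d + 2))"
    using d by (simp add: powr_powr)
  moreover have "(K * \<delta> ^ d) powr (1 / real d) = K powr (1 / real d) * \<delta>"
  proof -
    have "(\<delta> ^ d) powr (1 / real d) = \<delta>"
      using \<delta> d by (simp add: powr_realpow[symmetric] powr_powr)
    then show ?thesis using K \<delta> by (simp add: powr_mult)
  qed
  ultimately have "e powr (1 / (real d + 2)) \<le> K powr (1 / real d) * \<delta>" by simp
  then have "K powr (- 1 / real d) * e powr (1 / (real d + 2)) \<le> K powr (- 1 / real d) * (K powr (1 / real d) * \<delta>)"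
    by (intro mult_left_mono) auto
  also have "\<dots> = \<delta>" using K by (simp add: powr_add[symmetric] mult.assoc[symmetric])
  finally show ?thesis .
qed

lemma amgm_enn:
  fixes t p :: ennreal
  shows "2 * t * p \<le> p^2 + t^2"
proof (cases p rule: ennreal_cases)
  case (real a)
  then show ?thesis
  proof (cases t rule: ennreal_cases)
    case (real b)
    have "2 * b * a \<le> a^2 + b^2" using sum_squares_ge_zero[of "a - b" 0]
      by (simp add: power2_eq_square algebra_simps)
    then have "ennreal (2 * b * a) \<le> ennreal (a^2 + b^2)" by (rule ennreal_leI)
    with real \<open>p = ennreal a\<close> \<open>0 \<le> a\<close> show ?thesis
      by (simp add: ennreal_mult' ennreal_plus[symmetric] ennreal_power[symmetric] mult.assoc)
  next
    case top then show ?thesis by (simp add: power2_eq_square)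
  qed
next
  case top then show ?thesis by (simp add: power2_eq_square)
qed


theorem corollary3p7:
  fixes \<mu> \<nu> :: "'a::euclidean_space measure"
    and \<Omega> :: "'a set" and \<rho> :: "'a \<Rightarrow> real"
    and lam_mu_low lam_mu_up lam_nu L C_val :: real
    and \<phi> :: "'a \<Rightarrow> real" and T :: "'a \<Rightarrow> 'a"
    and \<epsilon> :: real and \<pi> :: "('a \<times> 'a) measure"
  assumes mu_prob: "prob_space \<mu>" and nu_prob: "prob_space \<nu>"
    and nu_borel: "sets \<nu> = sets borel"
    (* (a) *)
    and Omega_open: "open \<Omega>" and Omega_bounded: "bounded \<Omega>"
    and Omega_conn: "connected \<Omega>" and Omega_lip: "lipschitz_domain \<Omega>"
    and Omega_ball: "\<Omega> \<subseteq> ball 0 1"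
    and rho_meas: "\<rho> \<in> borel_measurable borel"
    and mu_dens: "\<mu> = density lborel (\<lambda>x. ennreal (\<rho> x * indicator \<Omega> x))"
    and lam_mu_pos: "0 < lam_mu_low" and lam_mu_le: "lam_mu_low \<le> lam_mu_up"
    and rho_bounds: "AE x in lborel. x \<in> \<Omega> \<longrightarrow> lam_mu_low \<le> \<rho> x \<and> \<rho> x \<le> lam_mu_up"
    (* (b) *)
    and nu_ac: "absolutely_continuous lborel \<nu>"
    and nu_spt: "spt \<nu> \<subseteq> ball 0 1"
    and nu_dens: "AE y in lborel. y \<in> spt \<nu> \<longrightarrow> RN_deriv lborel \<nu> y \<le> ennreal lam_nu"
    (* (c) Brenier map T = grad phi, phi convex, T_# mu = nu, T L-Lipschitz *)
    and phi_convex: "convex_on UNIV \<phi>"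
    and T_grad: "\<And>x. (\<phi> has_derivative (\<lambda>h. T x \<bullet> h)) (at x)"
    and T_push: "distr \<mu> borel T = \<nu>"
    and T_lip: "L-lipschitz_on UNIV T"
    (* constant C_val *)
    and C_pos: "0 < C_val"
    and C_val: "\<And>e. 0 < e \<Longrightarrow> e \<le> 1 \<Longrightarrow>
        inverse C_val * e powr (2 / (2 + real DIM('a))) \<le> QOT_gap e \<mu> \<nu> \<and>
        QOT_gap e \<mu> \<nu> \<le> C_val * e powr (2 / (2 + real DIM('a)))"
    (* eps and the optimizer pi_eps *)
    and eps: "0 < \<epsilon>" "\<epsilon> \<le> 1"
    and pi_opt: "is_QOT_optimizer \<epsilon> \<mu> \<nu> \<pi>"
  shows "set_dist (spt \<pi>) (range (\<lambda>x. (x, T x)))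
           \<ge> ereal ((2 * lam_nu * (1 + L^2) powr (real DIM('a) / 2)
                      * measure lborel (ball (0::'a) 1) * C_val) powr (- 1 / real DIM('a))
                    * \<epsilon> powr (1 / (real DIM('a) + 2)))
       \<and> (SUP z\<in>spt \<pi>. ereal (norm (snd z - T (fst z))))
           \<ge> ereal ((2 * lam_nu * (1 + L^2) powr (real DIM('a) / 2)
                      * measure lborel (ball (0::'a) 1) * C_val) powr (- 1 / real DIM('a))
                    * \<epsilon> powr (1 / (real DIM('a) + 2)))"
  proof -
  let ?d = "DIM('a)"
  let ?\<omega> = "measure lborel (ball (0::'a) 1)"
  let ?P = "\<mu> \<Otimes>\<^sub>M \<nu>"
  have sets_mu: "sets \<mu> = sets borel" using mu_dens by simp
  have "sets ?P = sets (borel \<Otimes>\<^sub>M (borel :: 'a measure))"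
    by (rule sets_pair_measure_cong[OF sets_mu nu_borel])
  then have sets_P: "sets ?P = sets (borel :: ('a \<times> 'a) measure)"
    by (metis borel_prod)
  have pic: "\<pi> \<in> couplings \<mu> \<nu>" and piac: "absolutely_continuous ?P \<pi>"
    and piobj: "qot_obj \<epsilon> \<mu> \<nu> \<pi> = QOT \<epsilon> \<mu> \<nu>"
    using pi_opt unfolding is_QOT_optimizer_def by auto
  have sets_pi: "sets \<pi> = sets (borel :: ('a \<times> 'a) measure)" and pi_prob: "prob_space \<pi>"
    using pic sets_P unfolding couplings_def by auto
  have space_pi: "space \<pi> = UNIV" using sets_eq_imp_space_eq[OF sets_pi] by simp
  interpret Pp: prob_space ?P using prob_space_pair[OF mu_prob nu_prob] .
  interpret nup: prob_space \<nu> using nu_prob .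
  interpret mup: prob_space \<mu> using mu_prob .
  interpret pip: prob_space \<pi> using pi_prob .
  define p where "p = RN_deriv ?P \<pi>"
  have pdens: "density ?P p = \<pi>"
    unfolding p_def using piac sets_pi sets_P by (intro Pp.density_RN_deriv) auto
  have pmeas: "p \<in> borel_measurable ?P" unfolding p_def by simp
  have Tcont: "continuous_on UNIV T" using T_lip by (rule lipschitz_on_continuous_on)
  have Tmeas: "T \<in> borel_measurable borel" using Tcont by (rule borel_measurable_continuous_onI)
  have nu_null: "- spt \<nu> \<in> null_sets \<nu>" using spt_null[OF nu_borel] .
  have nu_closed: "closed (spt \<nu>)" using spt_closed[OF nu_borel] .
  have pi_null: "- spt \<pi> \<in> null_sets \<pi>" using spt_null[OF sets_pi] .
  have pi_closed: "closed (spt \<pi>)" using spt_closed[OF sets_pi] .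
  define I where "I = (\<integral>\<^sup>+ z. ennreal (qcost z) \<partial>\<pi>)"
  define A where "A = (\<integral>\<^sup>+ z. (p z)^2 \<partial>?P)"
  have QOTeq: "QOT \<epsilon> \<mu> \<nu> = I + ennreal (\<epsilon> / 2) * A"
    using piobj unfolding qot_obj_def I_def A_def p_def by simp
  have gap_lo: "inverse C_val * \<epsilon> powr (2 / (2 + real ?d)) \<le> QOT_gap \<epsilon> \<mu> \<nu>"
    and gap_up: "QOT_gap \<epsilon> \<mu> \<nu> \<le> C_val * \<epsilon> powr (2 / (2 + real ?d))"
    using C_val[OF eps] by auto
  have "0 < inverse C_val * \<epsilon> powr (2 / (2 + real ?d))" using C_pos eps by simp
  then have "0 < enn2real (QOT \<epsilon> \<mu> \<nu>)"
    using gap_lo unfolding QOT_gap_def using enn2real_nonneg[of "OT \<mu> \<nu>"] by linarith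
  then have QOTfin: "QOT \<epsilon> \<mu> \<nu> < top" using less_top by fastforce
  have Ifin: "I < top" using QOTfin QOTeq by (simp add: less_top)
  have "ennreal (\<epsilon> / 2) * A < top" using QOTfin QOTeq by simp
  then have Afin: "A < top" using eps by (auto simp: ennreal_mult_less_top)
  have OTle: "OT \<mu> \<nu> \<le> I" unfolding OT_def I_def using pic by (rule INF_lower)
  have "enn2real (OT \<mu> \<nu>) \<le> enn2real I" using OTle Ifin by (intro enn2real_mono) auto
  moreover have "enn2real (QOT \<epsilon> \<mu> \<nu>) = enn2real I + \<epsilon> / 2 * enn2real A"
    using Ifin Afin eps unfolding QOTeq
    by (subst enn2real_plus) (auto simp: enn2real_mult ennreal_mult_less_top)
  ultimately have gapA: "\<epsilon> / 2 * enn2real A \<le> C_val * \<epsilon> powr (2 / (2 + real ?d))"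
    using gap_up unfolding QOT_gap_def by linarith
  have key: "0 < r \<and> 0 < lam_nu \<and> \<epsilon> powr (real ?d / (real ?d + 2)) \<le> 2 * C_val * lam_nu * ?\<omega> * r ^ ?d"
    if hr: "\<forall>z\<in>spt \<pi>. norm (snd z - T (fst z)) < r" for r
  proof -
    define S where "S = {z::'a\<times>'a. norm (snd z - T (fst z)) < r}"
    have "continuous_on UNIV (\<lambda>z::'a\<times>'a. norm (snd z - T (fst z)))"
      by (intro continuous_intros continuous_on_compose2[OF Tcont]) auto
    then have "open S" unfolding S_def by (intro open_Collect_less) (auto intro: continuous_intros)
    then have Smeas: "S \<in> sets borel" by simp
    have sptm: "spt \<pi> \<in> sets borel" using pi_closed by auto
    have "emeasure \<pi> UNIV \<le> emeasure \<pi> (spt \<pi> \<union> - spt \<pi>)" by simp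
    also have "\<dots> \<le> emeasure \<pi> (spt \<pi>) + emeasure \<pi> (- spt \<pi>)"
      by (intro emeasure_subadditive) (use sptm pi_closed sets_pi in auto)
    also have "\<dots> = emeasure \<pi> (spt \<pi>)" using pi_null by auto
    also have "\<dots> \<le> emeasure \<pi> S"
      by (intro emeasure_mono) (use hr Smeas sets_pi in \<open>auto simp: S_def\<close>)
    finally have piU: "emeasure \<pi> UNIV \<le> emeasure \<pi> S" .
    have "emeasure \<pi> UNIV = 1" using pip.emeasure_space_1 unfolding space_pi .
    with piU have piS1: "1 \<le> emeasure \<pi> S" by simp
    have piS: "emeasure \<pi> S = 1" by (rule antisym[OF pip.emeasure_le_1 piS1])
    have "r > 0"
    proof (rule ccontr)
      assume "\<not> r > 0"
      then have "S = {}" unfolding S_def using norm_ge_zero by (auto simp: not_less intro: order.trans)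
      then show False using piS by simp
    qed
    define m where "m = measure ?P S"
    have PS: "emeasure ?P S = ennreal m" unfolding m_def by (simp add: Pp.emeasure_eq_measure)
    have m0: "m \<ge> 0" unfolding m_def by simp
    have mpos: "m > 0"
    proof (rule ccontr)
      assume "\<not> m > 0"
      then have "S \<in> null_sets ?P" using PS m0 Smeas sets_P by (auto simp: null_sets_def)
      then have "S \<in> null_sets \<pi>" using piac unfolding absolutely_continuous_def by auto
      then show False using piS by auto
    qed
    define t where "t = ennreal (1 / m)"
    have SmP[measurable]: "S \<in> sets ?P" using Smeas sets_P by simp
    note pmeas[measurable]
    have pS: "(\<lambda>z. p z * indicator S z) \<in> borel_measurable ?P" by measurable
    have p2S: "(\<lambda>z. (p z)^2 * indicator S z) \<in> borel_measurable ?P" by measurable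
    have tS: "(\<lambda>z. t^2 * indicator S z) \<in> borel_measurable ?P" by measurable
    have "emeasure \<pi> S = (\<integral>\<^sup>+ z. p z * indicator S z \<partial>?P)"
      by (subst pdens[symmetric]) (rule emeasure_density[OF pmeas SmP])
    with piS have int1: "(\<integral>\<^sup>+ z. p z * indicator S z \<partial>?P) = 1" by simp
    have "(\<integral>\<^sup>+ z. (2 * t) * (p z * indicator S z) \<partial>?P) = 2 * t * (\<integral>\<^sup>+ z. p z * indicator S z \<partial>?P)"
      by (rule nn_integral_cmult[OF pS])
    then have "2 * t = (\<integral>\<^sup>+ z. (2 * t) * (p z * indicator S z) \<partial>?P)" using int1 by simp
    also have "\<dots> \<le> (\<integral>\<^sup>+ z. ((p z)^2 * indicator S z + t^2 * indicator S z) \<partial>?P)"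
    proof (intro nn_integral_mono)
      fix z
      show "2 * t * (p z * indicator S z) \<le> (p z)^2 * indicator S z + t^2 * indicator S z"
        using amgm_enn[of t "p z"] by (cases "z \<in> S") (auto simp: mult.assoc)
    qed
    also have "\<dots> = (\<integral>\<^sup>+ z. (p z)^2 * indicator S z \<partial>?P) + (\<integral>\<^sup>+ z. t^2 * indicator S z \<partial>?P)"
      by (rule nn_integral_add[OF p2S tS])
    also have "(\<integral>\<^sup>+ z. t^2 * indicator S z \<partial>?P) = t^2 * emeasure ?P S"
      by (rule nn_integral_cmult_indicator[OF SmP])
    also have "(\<integral>\<^sup>+ z. (p z)^2 * indicator S z \<partial>?P) \<le> A"
      unfolding A_def by (intro nn_integral_mono) (auto simp: indicator_def)
    finally have ineq: "2 * t \<le> A + t^2 * ennreal m" unfolding PS by (simp add: add_right_mono)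
    obtain a where a: "A = ennreal a" "a \<ge> 0" using Afin by (cases A) auto
    have e1: "2 * t = ennreal (2 / m)"
    proof -
      have "ennreal (2 / m) = ennreal (2 * (1 / m))" by simp
      also have "\<dots> = ennreal 2 * ennreal (1 / m)" using m0 by (intro ennreal_mult) auto
      finally have "ennreal (2 / m) = ennreal 2 * ennreal (1 / m)" .
      then show ?thesis by (simp add: t_def)
    qed
    have e2: "t^2 * ennreal m = ennreal (1 / m)"
    proof -
      have "t^2 * ennreal m = ennreal ((1 / m)^2 * m)" unfolding t_def using m0
        by (simp add: ennreal_power ennreal_mult)
      also have "(1 / m)^2 * m = 1 / m" using mpos by (simp add: power2_eq_square)
      finally show ?thesis .
    qed
    have "ennreal (2 / m) \<le> ennreal (a + 1 / m)"
      using ineq unfolding e1 e2 a(1) using a(2) m0 by (simp add: ennreal_plus)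
    then have "2 / m \<le> a + 1 / m" using a mpos by (subst (asm) ennreal_le_iff) auto
    then have Alo: "1 / m \<le> enn2real A" using a by simp
    have "emeasure ?P S = (\<integral>\<^sup>+ x. emeasure \<nu> (Pair x -` S) \<partial>\<mu>)"
      using Smeas sets_P by (intro nup.emeasure_pair_measure_alt) auto
    also have "\<dots> \<le> (\<integral>\<^sup>+ x. ennreal lam_nu * ennreal (r ^ ?d * ?\<omega>) \<partial>\<mu>)"
    proof (intro nn_integral_mono)
      fix x
      have "Pair x -` S = ball (T x) r" unfolding S_def by (auto simp: dist_norm norm_minus_commute)
      then have "emeasure \<nu> (Pair x -` S) \<le> ennreal lam_nu * emeasure lborel (ball (T x) r)"
        using nu_ball[OF nu_borel nu_ac nu_dens nu_null nu_closed] by auto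
      then show "emeasure \<nu> (Pair x -` S) \<le> ennreal lam_nu * ennreal (r ^ ?d * ?\<omega>)"
        using lborel_ball[of r "T x"] \<open>r > 0\<close> by simp
    qed
    also have "\<dots> = ennreal lam_nu * ennreal (r ^ ?d * ?\<omega>)"
      using mup.emeasure_space_1 by simp
    finally have mle: "ennreal m \<le> ennreal lam_nu * ennreal (r ^ ?d * ?\<omega>)" using PS by simp
    have lam: "lam_nu > 0"
    proof (rule ccontr)
      assume "\<not> lam_nu > 0"
      then have "ennreal lam_nu = 0" by (simp add: ennreal_eq_0_iff)
      then show False using mle mpos by simp
    qed
    have mle2: "m \<le> lam_nu * (r ^ ?d * ?\<omega>)"
      using mle lam \<open>r > 0\<close> by (simp add: ennreal_mult'[symmetric] ennreal_le_iff)
    have "\<epsilon> / (2 * m) \<le> C_val * \<epsilon> powr (2 / (2 + real ?d))"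
    proof -
      have "\<epsilon> / (2 * m) = \<epsilon> / 2 * (1 / m)" by simp
      also have "\<dots> \<le> \<epsilon> / 2 * enn2real A" using Alo eps by (intro mult_left_mono) auto
      finally show ?thesis using gapA by linarith
    qed
    then have "\<epsilon> \<le> 2 * C_val * m * \<epsilon> powr (2 / (2 + real ?d))"
      using mpos by (simp add: divide_le_eq mult_ac)
    moreover have "\<epsilon> = \<epsilon> powr (real ?d / (real ?d + 2)) * \<epsilon> powr (2 / (2 + real ?d))"
    proof -
      have dd: "real ?d + 2 \<noteq> 0" by (simp add: add_nonneg_eq_0_iff)
      have "real ?d / (real ?d + 2) + 2 / (2 + real ?d) = real ?d / (real ?d + 2) + 2 / (real ?d + 2)"
        by (simp add: add.commute)
      also have "\<dots> = (real ?d + 2) / (real ?d + 2)" by (rule add_divide_distrib[symmetric])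
      also have "\<dots> = 1" using dd by simp
      finally have "real ?d / (real ?d + 2) + 2 / (2 + real ?d) = 1" .
      then show ?thesis using eps by (simp add: powr_add[symmetric])
    qed
    ultimately have "\<epsilon> powr (real ?d / (real ?d + 2)) * \<epsilon> powr (2 / (2 + real ?d))
        \<le> (2 * C_val * m) * \<epsilon> powr (2 / (2 + real ?d))" by simp
    then have "\<epsilon> powr (real ?d / (real ?d + 2)) \<le> 2 * C_val * m"
      by (rule mult_right_le_imp_le) (use eps in simp)
    also have "\<dots> \<le> 2 * C_val * (lam_nu * (r ^ ?d * ?\<omega>))"
      using mle2 C_pos by simp
    finally show ?thesis using lam \<open>r > 0\<close> by (simp add: mult_ac)
  qed
  define K where "K = 2 * lam_nu * (1 + L^2) powr (real ?d / 2) * ?\<omega> * C_val"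
  define B where "B = K powr (- 1 / real ?d) * \<epsilon> powr (1 / (real ?d + 2))"
  have Lpos: "1 + L^2 > 0" by (simp add: add_pos_nonneg)
  have sq: "sqrt (1 + L^2) ^ ?d = (1 + L^2) powr (real ?d / 2)"
    using Lpos by (simp add: powr_half_sqrt[symmetric] powr_realpow[symmetric] powr_powr)
  have Kge: "2 * C_val * lam_nu * ?\<omega> * r ^ ?d \<le> K * r ^ ?d" if "lam_nu > 0" "r > 0" for r
  proof -
    have "1 \<le> (1 + L^2) powr (real ?d / 2)" using Lpos by (simp add: ge_one_powr_ge_zero)
    moreover have "0 \<le> 2 * C_val * lam_nu * ?\<omega> * r ^ ?d" using that C_pos by simp
    ultimately have "(2 * C_val * lam_nu * ?\<omega> * r ^ ?d) * 1
        \<le> (2 * C_val * lam_nu * ?\<omega> * r ^ ?d) * (1 + L^2) powr (real ?d / 2)"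
      by (intro mult_left_mono)
    moreover have "K * r ^ ?d = (2 * C_val * lam_nu * ?\<omega> * r ^ ?d) * (1 + L^2) powr (real ?d / 2)"
      unfolding K_def by (simp add: mult_ac)
    ultimately show ?thesis by (metis mult_1_right)
  qed
  have Kpos: "K > 0" if "lam_nu > 0" "0 < ?\<omega>" using that C_pos Lpos unfolding K_def by simp
  have omega_pos: "0 < ?\<omega>"
    if h: "\<epsilon> powr (real ?d / (real ?d + 2)) \<le> 2 * C_val * lam_nu * ?\<omega> * r ^ ?d" for r
  proof (rule ccontr)
    assume "\<not> 0 < ?\<omega>"
    then have "?\<omega> = 0" using measure_nonneg[of lborel "ball (0::'a) 1"] by linarith
    then have "\<epsilon> powr (real ?d / (real ?d + 2)) \<le> 0" using h by simp
    moreover have "0 < \<epsilon> powr (real ?d / (real ?d + 2))" using eps by simp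
    ultimately show False by linarith
  qed
  have d1: "?d \<ge> 1" by (simp add: DIM_positive Suc_leI)
  have part2: "ereal B \<le> (SUP z\<in>spt \<pi>. ereal (norm (snd z - T (fst z))))"
  proof (rule ccontr)
    assume "\<not> ?thesis"
    then have "(SUP z\<in>spt \<pi>. ereal (norm (snd z - T (fst z)))) < ereal B" by simp
    then obtain x where x: "(SUP z\<in>spt \<pi>. ereal (norm (snd z - T (fst z)))) < x" "x < ereal B"
      using dense by blast
    then obtain r where r: "x = ereal r" by (cases x) auto
    have hr: "\<forall>z\<in>spt \<pi>. norm (snd z - T (fst z)) < r"
    proof
      fix z assume "z \<in> spt \<pi>"
      then have "ereal (norm (snd z - T (fst z))) \<le> (SUP z\<in>spt \<pi>. ereal (norm (snd z - T (fst z))))"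
        by (rule SUP_upper)
      then have "ereal (norm (snd z - T (fst z))) < x" using x(1) by (rule order.strict_trans1)
      then show "norm (snd z - T (fst z)) < r" using r by simp
    qed
    have rpos: "r > 0" and lam: "lam_nu > 0"
      and k: "\<epsilon> powr (real ?d / (real ?d + 2)) \<le> 2 * C_val * lam_nu * ?\<omega> * r ^ ?d"
      using key[OF hr] by auto
    have "\<epsilon> powr (real ?d / (real ?d + 2)) \<le> K * r ^ ?d"
      using k Kge[OF lam rpos] by (rule order_trans)
    then have "B \<le> r" unfolding B_def
      by (rule arith_final[OF Kpos[OF lam omega_pos[OF k]] eps(1) rpos d1])
    then show False using x r by simp
  qed
  have part1: "ereal B \<le> set_dist (spt \<pi>) (range (\<lambda>x. (x, T x)))"
  proof (rule ccontr)
    assume "\<not> ?thesis"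
    then have "set_dist (spt \<pi>) (range (\<lambda>x. (x, T x))) < ereal B" by simp
    then obtain x where x: "set_dist (spt \<pi>) (range (\<lambda>x. (x, T x))) < x" "x < ereal B"
      using dense by blast
    then obtain \<delta> where r: "x = ereal \<delta>" unfolding set_dist_def by (cases x) auto
    have hr: "\<forall>z\<in>spt \<pi>. norm (snd z - T (fst z)) < sqrt (1 + L^2) * \<delta>"
    proof
      fix z assume z: "z \<in> spt \<pi>"
      then have "ereal (infdist z (range (\<lambda>x. (x, T x)))) \<le> set_dist (spt \<pi>) (range (\<lambda>x. (x, T x)))"
        unfolding set_dist_def by (rule SUP_upper)
      then have "ereal (infdist z (range (\<lambda>x. (x, T x)))) < x" using x(1) by (rule order.strict_trans1)
      then have "infdist z (range (\<lambda>x. (x, T x))) < \<delta>" using r by simp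
      then obtain g where "g \<in> range (\<lambda>x. (x, T x))" "dist z g < \<delta>"
        by (rule infdist_lessE) auto
      then obtain x' where "dist (fst z, snd z) (x', T x') < \<delta>" by auto
      from graph_close[OF T_lip this] show "norm (snd z - T (fst z)) < sqrt (1 + L^2) * \<delta>" .
    qed
    have rpos0: "sqrt (1 + L^2) * \<delta> > 0" and lam: "lam_nu > 0"
      and k: "\<epsilon> powr (real ?d / (real ?d + 2)) \<le> 2 * C_val * lam_nu * ?\<omega> * (sqrt (1 + L^2) * \<delta>) ^ ?d"
      using key[OF hr] by auto
    have rpos: "\<delta> > 0" using rpos0 Lpos by (simp add: zero_less_mult_iff)
    have "2 * C_val * lam_nu * ?\<omega> * (sqrt (1 + L^2) * \<delta>) ^ ?d = K * \<delta> ^ ?d"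
      unfolding K_def power_mult_distrib sq by (simp add: mult_ac)
    with k have "\<epsilon> powr (real ?d / (real ?d + 2)) \<le> K * \<delta> ^ ?d" by simp
    then have "B \<le> \<delta>" unfolding B_def
      by (rule arith_final[OF Kpos[OF lam omega_pos[OF k]] eps(1) rpos d1])
    then show False using x r by simp
  qed
  show ?thesis using part1 part2 unfolding B_def K_def by simp
qed

end
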